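(* Let $d:\mathcal X\times\hat{\mathcal X}\to[0,\infty)$ be a distortion function such that the matrix $[e^{-s_1d(i,j)}]_{(i,j)\in\mathcal X\times\hat{\mathcal X}}$ is full rank. Then every eigenvalue of $M$ is strictly positive, where $$M_{ij}=q^*(i)\sum_xp(x)\frac{A(x,i)A(x,j)}{\big(\sum_kq^*(k)A(x,k)\big)^2}.$$
   Context: Finite alphabets $\mathcal X=\hat{\mathcal X}$, source distribution $p$, and multipliers $s_1,s_2\ge0$. $f:(0,\infty)\to\mathbb R$ is convex with $f(1)=0$ and twice differentiable, and $D_f(p\|q)=\sum_xq(x)f(p(x)/q(x))$. $q^*$ is a fixed point achieving the rate-distortion-perception function of the implicitly defined map $$S[q](i)=q(i)\sum_xp(x)\frac{A_q(x,i)}{\sum_kq(k)A_q(x,k)},\qquad A_q(x,i)=\exp\{-s_1d(x,i)-s_2[f(p(i)/S[q](i))-\tfrac{p(i)}{S[q](i)}f'(p(i)/S[q](i))]\},$$ and $A=A_{q^*}$. *)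

theory Defs
  imports "HOL-Analysis.Analysis"
begin

text \<open>Alphabet: a finite type 'a (source and reconstruction alphabets coincide).
  Matrices are elements of real^'a^'a, rows/columns indexed by the alphabet.\<close>

definition eigenvalue_of :: "real^'n^'n \<Rightarrow> complex \<Rightarrow> bool" where
  "eigenvalue_of M \<mu> \<longleftrightarrow>
     (\<exists>v :: complex^'n. v \<noteq> 0 \<and>
        (\<chi> i j. complex_of_real (M $ i $ j)) *v v = \<mu> *s v)"

text \<open>The function A_q(x,i) with S[q] replaced by its value at the fixed point.\<close>
definition Afun :: "('a \<Rightarrow> 'a \<Rightarrow> real) \<Rightarrow> (real \<Rightarrow> real) \<Rightarrow> (real \<Rightarrow> real) \<Rightarrow> real \<Rightarrow> real
     \<Rightarrow> ('a \<Rightarrow> real) \<Rightarrow> ('a \<Rightarrow> real) \<Rightarrow> 'a \<Rightarrow> 'a \<Rightarrow> real" where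
  "Afun d f f' s1 s2 p Sq x i =
     exp (- s1 * d x i - s2 * (f (p i / Sq i) - p i / Sq i * f' (p i / Sq i)))"

text \<open>The map S[q], given the value Sq of S[q] used inside A (implicit definition).\<close>
definition Smap :: "('a::finite \<Rightarrow> 'a \<Rightarrow> real) \<Rightarrow> (real \<Rightarrow> real) \<Rightarrow> (real \<Rightarrow> real) \<Rightarrow> real \<Rightarrow> real
     \<Rightarrow> ('a \<Rightarrow> real) \<Rightarrow> ('a \<Rightarrow> real) \<Rightarrow> ('a \<Rightarrow> real) \<Rightarrow> 'a \<Rightarrow> real" where
  "Smap d f f' s1 s2 p q Sq i =
     q i * (\<Sum>x\<in>UNIV. p x * Afun d f f' s1 s2 p Sq x i /
                        (\<Sum>k\<in>UNIV. q k * Afun d f f' s1 s2 p Sq x k))"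

definition Mmat :: "('a::finite \<Rightarrow> real) \<Rightarrow> ('a \<Rightarrow> real) \<Rightarrow> ('a \<Rightarrow> 'a \<Rightarrow> real) \<Rightarrow> real^'a^'a" where
  "Mmat p q A = (\<chi> i j. q i * (\<Sum>x\<in>UNIV. p x * A x i * A x j /
                                   (\<Sum>k\<in>UNIV. q k * A x k)^2))"

end

theory Submission
  imports Defs
begin

lemma real_inj_aux:
  fixes E :: "'a::finite \<Rightarrow> 'a \<Rightarrow> real"
  assumes r: "rank ((\<chi> i j. E i j) :: real^'a^'a) = CARD('a)"
    and h: "\<And>x. (\<Sum>i\<in>UNIV. E x i * y i) = 0"
  shows "y i = 0"
proof -
  let ?y = "(\<chi> i. y i) :: real^'a"
  have "((\<chi> i j. E i j) :: real^'a^'a) *v ?y = 0"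
    using h by (simp add: matrix_vector_mult_def vec_eq_iff)
  hence "?y = 0" using r matrix_nonfull_linear_equations_eq by blast
  thus ?thesis by (metis vec_lambda_beta zero_index)
qed

lemma complex_inj_aux:
  fixes E :: "'a::finite \<Rightarrow> 'a \<Rightarrow> real" and u :: "'a \<Rightarrow> complex"
  assumes r: "rank ((\<chi> i j. E i j) :: real^'a^'a) = CARD('a)"
    and h: "\<And>x. (\<Sum>i\<in>UNIV. complex_of_real (E x i) * u i) = 0"
  shows "u i = 0"
proof -
  have re: "(\<Sum>i\<in>UNIV. E x i * Re (u i)) = 0" for x
  proof -
    have "Re (\<Sum>i\<in>UNIV. complex_of_real (E x i) * u i) = 0" using h by simp
    thus ?thesis by (simp add: Re_sum)
  qed
  have im: "(\<Sum>i\<in>UNIV. E x i * Im (u i)) = 0" for x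
  proof -
    have "Im (\<Sum>i\<in>UNIV. complex_of_real (E x i) * u i) = 0" using h by simp
    thus ?thesis by (simp add: Im_sum)
  qed
  have "Re (u i) = 0" by (rule real_inj_aux[OF r re])
  moreover have "Im (u i) = 0" by (rule real_inj_aux[OF r im])
  ultimately show ?thesis by (simp add: complex_eq_iff)
qed

theorem lemma4:
  fixes p q :: "'a::finite \<Rightarrow> real"
    and d :: "'a \<Rightarrow> 'a \<Rightarrow> real"
    and f f' f'' :: "real \<Rightarrow> real"
    and s1 s2 :: real
  assumes p_pos: "\<And>x. p x > 0" and p_sum: "(\<Sum>x\<in>UNIV. p x) = 1"
    and q_pos: "\<And>x. q x > 0" and q_sum: "(\<Sum>x\<in>UNIV. q x) = 1"
    and s1: "s1 \<ge> 0" and s2: "s2 \<ge> 0"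
    and f_convex: "convex_on {0<..} f" and f_one: "f 1 = 0"
    and f_deriv: "\<And>t. t > 0 \<Longrightarrow> (f has_real_derivative f' t) (at t)"
    and f'_deriv: "\<And>t. t > 0 \<Longrightarrow> (f' has_real_derivative f'' t) (at t)"
    and fixed_point: "\<And>i. Smap d f f' s1 s2 p q q i = q i"
    and d_nonneg: "\<And>x y. d x y \<ge> 0"
    and full_rank: "rank ((\<chi> i j. exp (- s1 * d i j)) :: real^'a^'a) = CARD('a)"
  shows "\<forall>\<mu>. eigenvalue_of (Mmat p q (Afun d f f' s1 s2 p q)) \<mu> \<longrightarrow>
           \<mu> \<in> \<real> \<and> Re \<mu> > 0"
proof (intro allI impI)
  fix \<mu>
  assume "eigenvalue_of (Mmat p q (Afun d f f' s1 s2 p q)) \<mu>"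
  then obtain v :: "complex^'a" where v0: "v \<noteq> 0"
    and ev: "(\<chi> i j. complex_of_real (Mmat p q (Afun d f f' s1 s2 p q) $ i $ j)) *v v = \<mu> *s v"
    unfolding eigenvalue_of_def by blast
  define A where "A = Afun d f f' s1 s2 p q"
  define c where "c i = exp (- s2 * (f (p i / q i) - p i / q i * f' (p i / q i)))" for i
  have A_eq: "A x i = exp (- s1 * d x i) * c i" for x i
    unfolding A_def Afun_def c_def by (simp add: exp_add[symmetric] exp_diff)
  have c_pos: "c i > 0" for i unfolding c_def by simp
  have A_pos: "A x i > 0" for x i using A_eq c_pos by simp
  define Z where "Z x = (\<Sum>k\<in>UNIV. q k * A x k)" for x
  have Z_pos: "Z x > 0" for x unfolding Z_def
    by (rule sum_pos) (auto intro: mult_pos_pos q_pos A_pos)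
  define K where "K x = p x / (Z x)^2" for x
  have K_pos: "K x > 0" for x unfolding K_def using p_pos[of x] Z_pos[of x] by (simp add: divide_pos_pos)
  define M where "M = Mmat p q A"
  have M_eq: "M $ i $ j = q i * (\<Sum>x\<in>UNIV. K x * A x i * A x j)" for i j
    unfolding M_def Mmat_def K_def Z_def by (simp add: field_simps)
  have eqi: "(\<Sum>j\<in>UNIV. complex_of_real (M $ i $ j) * v $ j) = \<mu> * v $ i" for i
  proof -
    have "((\<chi> i j. complex_of_real (M $ i $ j)) *v v) $ i = (\<mu> *s v) $ i"
      using ev unfolding M_def A_def by simp
    thus ?thesis by (simp add: matrix_vector_mult_def)
  qed
  define w where "w x = (\<Sum>i\<in>UNIV. complex_of_real (A x i) * v $ i)" for x
  define L where "L = (\<Sum>i\<in>UNIV. cnj (v $ i) / complex_of_real (q i) *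
      (\<Sum>j\<in>UNIV. complex_of_real (M $ i $ j) * v $ j))"
  define N where "N = (\<Sum>i\<in>UNIV. (cmod (v $ i))^2 / q i)"
  define R where "R = (\<Sum>x\<in>UNIV. K x * (cmod (w x))^2)"
  have L1: "L = \<mu> * complex_of_real N"
  proof -
    have "L = (\<Sum>i\<in>UNIV. \<mu> * complex_of_real ((cmod (v $ i))^2 / q i))"
      unfolding L_def eqi
    proof (rule sum.cong[OF refl])
      fix i
      have "cnj (v $ i) * v $ i = complex_of_real ((cmod (v $ i))^2)"
        by (metis complex_norm_square mult.commute of_real_power)
      thus "cnj (v $ i) / complex_of_real (q i) * (\<mu> * v $ i) =
          \<mu> * complex_of_real ((cmod (v $ i))^2 / q i)"
        by (simp add: field_simps)
    qed
    thus ?thesis unfolding N_def by (simp add: sum_distrib_left)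
  qed
  have L2: "L = complex_of_real R"
  proof -
    have "L = (\<Sum>i\<in>UNIV. \<Sum>j\<in>UNIV. \<Sum>x\<in>UNIV. complex_of_real (K x) *
        (complex_of_real (A x i) * cnj (v $ i)) * (complex_of_real (A x j) * v $ j))"
      unfolding L_def
    proof (rule sum.cong[OF refl])
      fix i
      have qi: "complex_of_real (q i) \<noteq> 0" using q_pos[of i] by simp
      have qne: "q i \<noteq> 0" using q_pos[of i] by simp
      show "cnj (v $ i) / complex_of_real (q i) * (\<Sum>j\<in>UNIV. complex_of_real (M $ i $ j) * v $ j) =
        (\<Sum>j\<in>UNIV. \<Sum>x\<in>UNIV. complex_of_real (K x) *
        (complex_of_real (A x i) * cnj (v $ i)) * (complex_of_real (A x j) * v $ j))"
        unfolding sum_distrib_left M_eq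
        by (rule sum.cong[OF refl]) (simp add: sum_distrib_left sum_distrib_right qi qne field_simps)
    qed
    also have "\<dots> = (\<Sum>i\<in>UNIV. \<Sum>x\<in>UNIV. \<Sum>j\<in>UNIV. complex_of_real (K x) *
        (complex_of_real (A x i) * cnj (v $ i)) * (complex_of_real (A x j) * v $ j))"
      by (rule sum.cong[OF refl]) (rule sum.swap)
    also have "\<dots> = (\<Sum>x\<in>UNIV. \<Sum>i\<in>UNIV. \<Sum>j\<in>UNIV. complex_of_real (K x) *
        (complex_of_real (A x i) * cnj (v $ i)) * (complex_of_real (A x j) * v $ j))"
      by (rule sum.swap)
    also have "\<dots> = (\<Sum>x\<in>UNIV. complex_of_real (K x) * (cnj (w x) * w x))"
    proof -
      have "(\<Sum>i\<in>UNIV. \<Sum>j\<in>UNIV. complex_of_real (K x) *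
        (complex_of_real (A x i) * cnj (v $ i)) * (complex_of_real (A x j) * v $ j)) =
        complex_of_real (K x) * (cnj (w x) * w x)" for x
      proof -
        have "complex_of_real (K x) * (cnj (w x) * w x) = complex_of_real (K x) *
          ((\<Sum>i\<in>UNIV. complex_of_real (A x i) * cnj (v $ i)) *
           (\<Sum>j\<in>UNIV. complex_of_real (A x j) * v $ j))"
          unfolding w_def by simp
        also have "\<dots> = (\<Sum>i\<in>UNIV. \<Sum>j\<in>UNIV. complex_of_real (K x) *
          (complex_of_real (A x i) * cnj (v $ i)) * (complex_of_real (A x j) * v $ j))"
          unfolding sum_product unfolding sum_distrib_left by (simp only: mult.assoc)
        finally show ?thesis by simp
      qed
      thus ?thesis by simp
    qed
    also have "\<dots> = complex_of_real R"
      unfolding R_def by (simp add: complex_norm_square[symmetric] mult.commute[of "cnj _"])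
    finally show ?thesis .
  qed
  obtain i0 where vi0: "v $ i0 \<noteq> 0" using v0 by (metis vec_eq_iff zero_index)
  have "\<exists>x. w x \<noteq> 0"
  proof (rule ccontr)
    assume "\<not> (\<exists>x. w x \<noteq> 0)"
    hence h: "(\<Sum>i\<in>UNIV. complex_of_real (exp (- s1 * d x i)) * (complex_of_real (c i) * v $ i)) = 0" for x
      unfolding w_def A_eq by (simp add: mult.assoc)
    have "complex_of_real (c i0) * v $ i0 = 0"
      by (rule complex_inj_aux[where E = "\<lambda>i j. exp (- s1 * d i j)", OF full_rank h])
    thus False using vi0 c_pos[of i0] by simp
  qed
  then obtain x0 where "w x0 \<noteq> 0" by blast
  have R_pos: "R > 0" unfolding R_def
  proof (rule sum_pos2[where i = x0])
    show "0 < K x0 * (cmod (w x0))\<^sup>2" using K_pos \<open>w x0 \<noteq> 0\<close> by simp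
    show "\<And>x. x \<in> UNIV \<Longrightarrow> 0 \<le> K x * (cmod (w x))\<^sup>2" using K_pos
      by (simp add: less_imp_le)
  qed auto
  have N_pos: "N > 0" unfolding N_def
  proof (rule sum_pos2[where i = i0])
    show "0 < (cmod (v $ i0))\<^sup>2 / q i0" using q_pos vi0 by simp
    show "\<And>i. i \<in> UNIV \<Longrightarrow> 0 \<le> (cmod (v $ i))\<^sup>2 / q i" using q_pos
      by (simp add: less_imp_le)
  qed auto
  have "\<mu> = complex_of_real (R / N)"
    using L1 L2 N_pos by (simp add: field_simps)
  thus "\<mu> \<in> \<real> \<and> Re \<mu> > 0" using R_pos N_pos by simp
qed

end
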